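(* Let $n\ge 1$ be an integer, let $g_i:[0,n]\to\mathbb{R}_{\ge 0}$ be a non-decreasing function and let $c_i\in\mathbb{R}$. For $z\in\{0,1,\ldots,n-1\}$ say that investing is a best response to $z$ if $g_i(1+z)-c_i\ge g_i(z)$. Then there exists a unique set $D_i\subseteq\{0,1,\ldots,n-1\}$ such that, for every $z\in\{0,\ldots,n-1\}$, investing is a best response to $z$ if and only if $z\in D_i$. Furthermore: (1) if $g_i$ is concave, $D_i$ is a downward-closed interval; (2) if $g_i$ is convex, $D_i$ is an upward-closed interval; (3) if $g_i$ is sigmoid, $D_i$ is an interval. Conversely, for every set $D_i\subseteq\{0,1,\ldots,n-1\}$ there exist a non-decreasing function $g_i:[0,n]\to\mathbb{R}_{\ge 0}$ and a cost $c_i$ such that, for every $z\in\{0,\ldots,n-1\}$, investing is a best response to $z$ if and only if $z\in D_i$. Furthermore: (1) if $D_i$ is a downward-closed interval, such a $g_i$ can be chosen concave; (2) if $D_i$ is an upward-closed interval, such a $g_i$ can be chosen convex; (3) if $D_i$ is an interval, such a $g_i$ can be chosen sigmoid.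
   Context: This models a player $i$ in a binary networked public goods game: if $i$ chooses $x_i\in\{0,1\}$ and $z$ of her network neighbors invest, her utility is $U_i(x_i,z)=g_i(x_i+z)-c_ix_i$; ties are broken in favor of investing, so investing is a best response to $z$ iff $U_i(1,z)\ge U_i(0,z)$. An interval means a set of consecutive integers in $\{0,\ldots,n-1\}$ (possibly empty); downward-closed means $z\in D_i$ and $0\le z'<z$ imply $z'\in D_i$; upward-closed means $z\in D_i$ and $z<z'\le n-1$ imply $z'\in D_i$. A function $g_i$ is called (generalized) sigmoid if there is some $\hat z\in[-\infty,\infty]$ such that $g_i$ is convex on $\{z:z\le\hat z\}$ and concave on $\{z:z\ge\hat z\}$ (so concave and convex functions are special cases). *)

theory Defs
  imports "HOL-Analysis.Analysis"
begin

definition best_resp :: "(real \<Rightarrow> real) \<Rightarrow> real \<Rightarrow> nat \<Rightarrow> bool" where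
  "best_resp g c z \<longleftrightarrow> g (1 + real z) - c \<ge> g (real z)"

definition admissible :: "nat \<Rightarrow> (real \<Rightarrow> real) \<Rightarrow> bool" where
  "admissible n g \<longleftrightarrow> mono_on {0..real n} g \<and> (\<forall>x\<in>{0..real n}. g x \<ge> 0)"

definition represents :: "nat \<Rightarrow> (real \<Rightarrow> real) \<Rightarrow> real \<Rightarrow> nat set \<Rightarrow> bool" where
  "represents n g c D \<longleftrightarrow> D \<subseteq> {0..<n} \<and> (\<forall>z<n. best_resp g c z \<longleftrightarrow> z \<in> D)"

definition is_interval_nat :: "nat set \<Rightarrow> bool" where
  "is_interval_nat D \<longleftrightarrow> (\<forall>a\<in>D. \<forall>b\<in>D. \<forall>z. a \<le> z \<and> z \<le> b \<longrightarrow> z \<in> D)"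

definition down_closed :: "nat set \<Rightarrow> bool" where
  "down_closed D \<longleftrightarrow> (\<forall>z\<in>D. \<forall>z'. z' < z \<longrightarrow> z' \<in> D)"

definition up_closed :: "nat \<Rightarrow> nat set \<Rightarrow> bool" where
  "up_closed n D \<longleftrightarrow> (\<forall>z\<in>D. \<forall>z'. z < z' \<and> z' \<le> n - 1 \<longrightarrow> z' \<in> D)"

definition sigmoid_on :: "nat \<Rightarrow> (real \<Rightarrow> real) \<Rightarrow> bool" where
  "sigmoid_on n g \<longleftrightarrow> (\<exists>zh::ereal.
      convex_on {x\<in>{0..real n}. ereal x \<le> zh} g \<and>
      concave_on {x\<in>{0..real n}. ereal x \<ge> zh} g)"

end

theory Submission
  imports Defs
begin

lemma slope_mono:
  fixes f :: "real \<Rightarrow> real"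
  assumes f: "convex_on S f" and S: "x1 \<in> S" "y1 \<in> S" "x2 \<in> S" "y2 \<in> S"
    and lt: "x1 < y1" "x2 < y2" "x1 \<le> x2" "y1 \<le> y2"
  shows "(f y1 - f x1) / (y1 - x1) \<le> (f y2 - f x2) / (y2 - x2)"
proof -
  have e: "(f q - f p) / (q - p) = (f p - f q) / (p - q)" for p q :: real
    by (metis minus_diff_eq minus_divide_divide)
  have A: "(f y1 - f x1) / (y1 - x1) \<le> (f y2 - f x1) / (y2 - x1)"
  proof (cases "y1 = y2")
    case False
    then have "y1 < y2" using lt by simp
    from convex_on_slope_le(1)[OF f S(1) S(4) lt(1) this] show ?thesis by (simp add: e)
  qed simp
  have B: "(f y2 - f x1) / (y2 - x1) \<le> (f y2 - f x2) / (y2 - x2)"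
  proof (cases "x1 = x2")
    case False
    then have "x1 < x2" using lt by simp
    from convex_on_slope_le(2)[OF f S(1) S(4) this lt(2)] show ?thesis by (simp add: e)
  qed simp
  from A B show ?thesis by linarith
qed

lemma slope_mono_concave:
  fixes f :: "real \<Rightarrow> real"
  assumes f: "concave_on S f" and S: "x1 \<in> S" "y1 \<in> S" "x2 \<in> S" "y2 \<in> S"
    and lt: "x1 < y1" "x2 < y2" "x1 \<le> x2" "y1 \<le> y2"
  shows "(f y1 - f x1) / (y1 - x1) \<ge> (f y2 - f x2) / (y2 - x2)"
proof -
  have "convex_on S (\<lambda>x. - f x)" using f by (simp add: concave_on_def)
  from slope_mono[OF this S lt]
  have "- ((f y1 - f x1) / (y1 - x1)) \<le> - ((f y2 - f x2) / (y2 - x2))"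
    by (simp add: minus_divide_left)
  then show ?thesis by linarith
qed

lemma convex_on_cong_pt:
  assumes "convex_on S f" "\<And>x. x \<in> S \<Longrightarrow> f x = g x"
  shows "convex_on S g"
  using assms unfolding convex_on_def convex_def by auto

lemma concave_on_cong_pt:
  assumes "concave_on S f" "\<And>x. x \<in> S \<Longrightarrow> f x = g x"
  shows "concave_on S g"
  using assms unfolding concave_on_def convex_on_def convex_def by auto

lemma concave_min_aff:
  fixes p q :: real
  assumes "convex S"
  shows "concave_on S (\<lambda>x. min (x - p) q)"
  unfolding concave_on_iff
proof (intro conjI assms ballI allI impI)
  fix x y u v :: real
  assume uv: "0 \<le> u" "0 \<le> v" "u + v = 1"
  have "u * min (x - p) q \<le> u * (x - p)" "u * min (x - p) q \<le> u * q"
    "v * min (y - p) q \<le> v * (y - p)" "v * min (y - p) q \<le> v * q"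
    using uv by (simp_all add: mult_left_mono)
  moreover have "u * (x - p) + v * (y - p) = u * x + v * y - (u + v) * p" "u * q + v * q = (u + v) * q"
    by (simp_all add: algebra_simps)
  ultimately show "u * min (x - p) q + v * min (y - p) q \<le> min (u *\<^sub>R x + v *\<^sub>R y - p) q"
    using uv(3) by simp
qed

lemma convex_max_aff:
  fixes k :: real
  assumes "convex S"
  shows "convex_on S (\<lambda>x. max 0 (x - k))"
  unfolding convex_on_def
proof (intro conjI assms ballI allI impI)
  fix x y u v :: real
  assume uv: "0 \<le> u" "0 \<le> v" "u + v = 1"
  have "u * max 0 (x - k) \<ge> u * (x - k)" "u * max 0 (x - k) \<ge> 0"
    "v * max 0 (y - k) \<ge> v * (y - k)" "v * max 0 (y - k) \<ge> 0"
    using uv by (simp_all add: mult_left_mono)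
  moreover have "u * (x - k) + v * (y - k) = u * x + v * y - (u + v) * k"
    by (simp add: algebra_simps)
  ultimately show "max 0 (u *\<^sub>R x + v *\<^sub>R y - k) \<le> u * max 0 (x - k) + v * max 0 (y - k)"
    using uv(3) by simp
qed


lemma sig_unimodal:
  fixes g :: "real \<Rightarrow> real"
  assumes sg: "sigmoid_on n g" and ab: "a < b" and bd: "b < d" and dn: "d < n"
    and ha: "c \<le> g (real a + 1) - g (real a)" and hd: "c \<le> g (real d + 1) - g (real d)"
  shows "c \<le> g (real b + 1) - g (real b)"
proof -
  obtain zh where cv: "convex_on {x\<in>{0..real n}. ereal x \<le> zh} g"
    and cc: "concave_on {x\<in>{0..real n}. ereal x \<ge> zh} g"
    using sg unfolding sigmoid_on_def by blast
  have bn: "real b + 1 \<le> real n" "real d + 1 \<le> real n" using bd dn by linarith+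
  have ab': "real a + 1 \<le> real b" using ab by linarith
  have bd': "real b + 1 \<le> real d" using bd by linarith
  consider "ereal (real b + 1) \<le> zh" | "zh \<le> ereal (real b)"
    | "ereal (real b) < zh" "zh < ereal (real b + 1)" by (meson linorder_not_le)
  then show ?thesis
  proof cases
    case 1
    have m: "ereal y \<le> zh" if "y \<le> real b + 1" for y
    proof -
      have "ereal y \<le> ereal (real b + 1)" using that by simp
      then show ?thesis using 1 by (rule order_trans)
    qed
    have "(g (real a + 1) - g (real a)) / (real a + 1 - real a)
        \<le> (g (real b + 1) - g (real b)) / (real b + 1 - real b)"
      by (rule slope_mono[OF cv]) (use m bn ab' in auto)
    then show ?thesis using ha by simp
  next
    case 2
    have m: "ereal y \<ge> zh" if "y \<ge> real b" for y
    proof -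
      have "ereal (real b) \<le> ereal y" using that by simp
      with 2 show ?thesis by (rule order_trans)
    qed
    have "(g (real b + 1) - g (real b)) / (real b + 1 - real b)
        \<ge> (g (real d + 1) - g (real d)) / (real d + 1 - real d)"
      by (rule slope_mono_concave[OF cc]) (use m bn bd' in auto)
    then show ?thesis using hd by simp
  next
    case 3
    then obtain r where r: "zh = ereal r" by (cases zh) auto
    with 3 have br: "real b < r" "r < real b + 1" by auto
    have s1: "(g (real a + 1) - g (real a)) / (real a + 1 - real a)
        \<le> (g r - g (real b)) / (r - real b)"
      by (rule slope_mono[OF cv]) (use r br bn ab' in auto)
    have s2: "(g (real b + 1) - g r) / (real b + 1 - r)
        \<ge> (g (real d + 1) - g (real d)) / (real d + 1 - real d)"
      by (rule slope_mono_concave[OF cc]) (use r br bn bd' in auto)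
    have "c \<le> (g r - g (real b)) / (r - real b)" using s1 ha by simp
    then have t1: "c * (r - real b) \<le> g r - g (real b)" using br by (simp add: pos_le_divide_eq)
    have "c \<le> (g (real b + 1) - g r) / (real b + 1 - r)" using s2 hd by simp
    then have t2: "c * (real b + 1 - r) \<le> g (real b + 1) - g r" using br by (simp add: pos_le_divide_eq)
    have "c * (r - real b) + c * (real b + 1 - r) = c" by (simp add: algebra_simps)
    then show ?thesis using t1 t2 by linarith
  qed
qed

theorem lemma2p3:
  fixes n :: nat
  assumes "n \<ge> 1"
  shows "(\<forall>g c. admissible n g \<longrightarrow>
            (\<exists>!D. represents n g c D) \<and>
            (\<forall>D. represents n g c D \<longrightarrow>
               (concave_on {0..real n} g \<longrightarrow> down_closed D \<and> is_interval_nat D) \<and>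
               (convex_on {0..real n} g \<longrightarrow> up_closed n D \<and> is_interval_nat D) \<and>
               (sigmoid_on n g \<longrightarrow> is_interval_nat D)))
       \<and>
         (\<forall>D. D \<subseteq> {0..<n} \<longrightarrow>
            (\<exists>g c. admissible n g \<and> represents n g c D) \<and>
            (down_closed D \<and> is_interval_nat D \<longrightarrow>
               (\<exists>g c. admissible n g \<and> represents n g c D \<and> concave_on {0..real n} g)) \<and>
            (up_closed n D \<and> is_interval_nat D \<longrightarrow>
               (\<exists>g c. admissible n g \<and> represents n g c D \<and> convex_on {0..real n} g)) \<and>
            (is_interval_nat D \<longrightarrow>
               (\<exists>g c. admissible n g \<and> represents n g c D \<and> sigmoid_on n g)))"
proof (intro conjI allI impI)
  fix g c assume adm: "admissible n g"
  let ?D = "{z. z < n \<and> best_resp g c z}"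
  have rD: "represents n g c ?D" unfolding represents_def by auto
  show "\<exists>!D. represents n g c D"
  proof (rule ex1I)
    show "represents n g c ?D" by (rule rD)
  next
    fix D assume "represents n g c D"
    then show "D = ?D" unfolding represents_def by auto
  qed
  fix D assume "represents n g c D"
  then have Dc: "z \<in> D \<longleftrightarrow> z < n \<and> c \<le> g (real z + 1) - g (real z)" for z
    unfolding represents_def best_resp_def by (auto simp: add.commute subset_iff)
  {
    assume cc: "concave_on {0..real n} g"
    show dc: "down_closed D" unfolding down_closed_def
    proof (intro ballI allI impI)
      fix z z' assume z: "z \<in> D" "z' < z"
      have "(g (real z' + 1) - g (real z')) / (real z' + 1 - real z')
        \<ge> (g (real z + 1) - g (real z)) / (real z + 1 - real z)"
        by (rule slope_mono_concave[OF cc]) (use z Dc[of z] in auto)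
      then show "z' \<in> D" using z Dc[of z] Dc[of z'] by simp
    qed
    show "is_interval_nat D" unfolding is_interval_nat_def
    proof (intro ballI allI impI)
      fix a b z assume "a \<in> D" "b \<in> D" "a \<le> z \<and> z \<le> b"
      then show "z \<in> D" using dc unfolding down_closed_def
        by (cases "z = b") auto
    qed
  next
    assume cc: "convex_on {0..real n} g"
    show dc: "up_closed n D" unfolding up_closed_def
    proof (intro ballI allI impI)
      fix z z' assume z: "z \<in> D" "z < z' \<and> z' \<le> n - 1"
      have "(g (real z + 1) - g (real z)) / (real z + 1 - real z)
        \<le> (g (real z' + 1) - g (real z')) / (real z' + 1 - real z')"
        by (rule slope_mono[OF cc]) (use z Dc[of z] in auto)
      moreover have "z' < n" using z by linarith
      ultimately show "z' \<in> D" using z Dc[of z] Dc[of z'] by simp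
    qed
    show "is_interval_nat D" unfolding is_interval_nat_def
    proof (intro ballI allI impI)
      fix a b z assume "a \<in> D" "b \<in> D" "a \<le> z \<and> z \<le> b"
      moreover have "b < n" using Dc[of b] \<open>b \<in> D\<close> by simp
      ultimately show "z \<in> D" using dc unfolding up_closed_def
        by (cases "z = a") auto
    qed
  next
    assume sg: "sigmoid_on n g"
    show "is_interval_nat D" unfolding is_interval_nat_def
    proof (intro ballI allI impI)
      fix a b z assume abz: "a \<in> D" "b \<in> D" "a \<le> z \<and> z \<le> b"
      show "z \<in> D"
      proof (cases "a = z \<or> z = b")
        case False
        then have "a < z" "z < b" using abz by auto
        from sig_unimodal[OF sg this] abz Dc[of a] Dc[of b] Dc[of z] show ?thesis by auto
      qed (use abz in auto)
    qed
  }
next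
  fix D assume Dn: "D \<subseteq> {0..<n}"
  have fD: "finite D" using Dn finite_subset by blast
  show "\<exists>g c. admissible n g \<and> represents n g c D"
  proof (intro exI conjI)
    let ?g = "\<lambda>x::real. real (card {z\<in>D. real z + 1 \<le> x})"
    show "admissible n ?g" unfolding admissible_def
      by (auto intro!: mono_onI card_mono finite_subset[OF _ fD])
    show "represents n ?g 1 D" unfolding represents_def best_resp_def
    proof (intro conjI allI impI Dn)
      fix z assume "z < n"
      have e1: "{z'\<in>D. real z' + 1 \<le> 1 + real z} = {z'\<in>D. z' \<le> z}" by auto
      have e2: "{z'\<in>D. real z' + 1 \<le> real z} = {z'\<in>D. z' < z}" by auto
      have e3: "z \<in> D \<Longrightarrow> {z'\<in>D. z' \<le> z} = insert z {z'\<in>D. z' < z}"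
        by auto
      have e4: "z \<notin> D \<Longrightarrow> {z'\<in>D. z' \<le> z} = {z'\<in>D. z' < z}"
        by (auto simp: le_less)
      have "finite {z'\<in>D. z' < z}" using fD by simp
      then show "(?g (1 + real z) - 1 \<ge> ?g (real z)) = (z \<in> D)"
        by (cases "z \<in> D") (simp_all add: e1 e2 e3 e4)
    qed
  qed
  show "\<exists>g c. admissible n g \<and> represents n g c D \<and> concave_on {0..real n} g"
    if dc: "down_closed D \<and> is_interval_nat D"
  proof -
    define k where "k = (if D = {} then 0 else Suc (Max D))"
    have kD: "z \<in> D \<longleftrightarrow> z < k" for z
    proof
      assume "z \<in> D" then show "z < k" using fD by (auto simp: k_def less_Suc_eq_le)
    next
      assume zk: "z < k"
      then have ne: "D \<noteq> {}" by (auto simp: k_def)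
      then have "Max D \<in> D" "z \<le> Max D" using fD zk by (auto simp: k_def)
      then show "z \<in> D" using dc unfolding down_closed_def by (cases "z = Max D") auto
    qed
    let ?g = "\<lambda>x::real. min (x - 0) (real k)"
    show ?thesis
    proof (intro exI conjI)
      show "admissible n ?g" unfolding admissible_def
        by (auto intro!: mono_onI)
      show "concave_on {0..real n} ?g" by (rule concave_min_aff) simp
      show "represents n ?g 1 D" unfolding represents_def best_resp_def
      proof (intro conjI allI impI Dn)
        fix z assume "z < n"
        have "z < k \<longleftrightarrow> real z + 1 \<le> real k" by linarith
        then show "(?g (1 + real z) - 1 \<ge> ?g (real z)) = (z \<in> D)"
          unfolding kD by auto
      qed
    qed
  qed
  show "\<exists>g c. admissible n g \<and> represents n g c D \<and> convex_on {0..real n} g"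
    if uc: "up_closed n D \<and> is_interval_nat D"
  proof -
    define k where "k = (if D = {} then n else Min D)"
    have kD: "z \<in> D \<longleftrightarrow> k \<le> z" if zn: "z < n" for z
    proof
      assume "z \<in> D" then show "k \<le> z" using fD by (auto simp: k_def)
    next
      assume zk: "k \<le> z"
      then have ne: "D \<noteq> {}" using zn by (auto simp: k_def)
      then have "Min D \<in> D" "Min D \<le> z" using fD zk by (auto simp: k_def)
      moreover have "z \<le> n - 1" using zn by linarith
      ultimately show "z \<in> D" using uc unfolding up_closed_def by (cases "z = Min D") auto
    qed
    let ?g = "\<lambda>x::real. max 0 (x - real k)"
    show ?thesis
    proof (intro exI conjI)
      show "admissible n ?g" unfolding admissible_def
        by (auto intro!: mono_onI)
      show "convex_on {0..real n} ?g" by (rule convex_max_aff) simp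
      show "represents n ?g 1 D" unfolding represents_def best_resp_def
      proof (intro conjI allI impI Dn)
        fix z assume zn: "z < n"
        have "k \<le> z \<longleftrightarrow> real k \<le> real z" "z < k \<longleftrightarrow> real z + 1 \<le> real k" by linarith+
        then show "(?g (1 + real z) - 1 \<ge> ?g (real z)) = (z \<in> D)"
          unfolding kD[OF zn] by auto
      qed
    qed
  qed
  show "\<exists>g c. admissible n g \<and> represents n g c D \<and> sigmoid_on n g"
    if iv: "is_interval_nat D"
  proof -
    define a where "a = (if D = {} then 0 else Min D)"
    define b where "b = (if D = {} then 0 else Suc (Max D))"
    have ab: "a \<le> b"
    proof (cases "D = {}")
      case False
      then have "Min D \<in> D" using fD by simp
      then have "Min D \<le> Max D" using fD by simp
      then show ?thesis using False by (simp add: a_def b_def)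
    qed (simp add: a_def b_def)
    have abD: "z \<in> D \<longleftrightarrow> a \<le> z \<and> z < b" for z
    proof
      assume "z \<in> D" then show "a \<le> z \<and> z < b" using fD by (auto simp: a_def b_def less_Suc_eq_le)
    next
      assume zk: "a \<le> z \<and> z < b"
      then have ne: "D \<noteq> {}" by (auto simp: b_def)
      then have "Min D \<in> D" "Max D \<in> D" "Min D \<le> z" "z \<le> Max D" using fD zk by (auto simp: a_def b_def)
      then show "z \<in> D" using iv unfolding is_interval_nat_def by blast
    qed
    let ?g = "\<lambda>x::real. min (max 0 (x - real a)) (real b - real a)"
    show ?thesis
    proof (intro exI conjI)
      show "admissible n ?g" unfolding admissible_def using ab
        by (auto intro!: mono_onI)
      have e1: "{x\<in>{0..real n}. ereal x \<le> ereal (real a)} = {0..min (real n) (real a)}" by auto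
      have e2: "{x\<in>{0..real n}. ereal x \<ge> ereal (real a)} = {real a..real n}" by auto
      have "convex_on {0..min (real n) (real a)} ?g"
        by (rule convex_on_cong_pt[where f="\<lambda>x. 0"]) (use ab in \<open>auto simp: convex_on_const\<close>)
      moreover have "concave_on {real a..real n} ?g"
        by (rule concave_on_cong_pt[OF concave_min_aff[of _ "real a" "real b - real a"]]) auto
      ultimately show "sigmoid_on n ?g" unfolding sigmoid_on_def
        by (intro exI[where x="ereal (real a)"]) (simp only: e1 e2)
      show "represents n ?g 1 D" unfolding represents_def best_resp_def
      proof (intro conjI allI impI Dn)
        fix z assume zn: "z < n"
        have "a \<le> z \<longleftrightarrow> real a \<le> real z" "z < a \<longleftrightarrow> real z + 1 \<le> real a"
          "z < b \<longleftrightarrow> real z + 1 \<le> real b" "b \<le> z \<longleftrightarrow> real b \<le> real z"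
          "real a \<le> real b" using ab by linarith+
        then show "(?g (1 + real z) - 1 \<ge> ?g (real z)) = (z \<in> D)"
          unfolding abD by auto
      qed
    qed
  qed
qed

end
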